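(* For every subset $I$ of the positive integers, the relation $\leq_I$ is a partial order on the set of planar forests.
   Context: Planar rooted trees have their children linearly ordered left to right; a planar forest is a finite, possibly empty, sequence $t_1\cdots t_n$ of planar rooted trees. Orders on vertices: $s\geq_{high}s'$ iff $s'=s$ or $s'$ is an ancestor of $s$; for $\geq_{high}$-incomparable $s,s'$, $s\geq_{left}s'$ iff $s\in t_i,s'\in t_j$ with $i<j$, or both lie in $t_i$ and $s\geq_{left}s'$ in the forest obtained from $t_i$ by deleting its root (recursively); $s\geq_{h,l}s'$ iff $s\geq_{high}s'$ or $s\geq_{left}s'$ (a total order). Number the vertices of a forest $F$ of weight $n$ as $s_1\geq_{h,l}\cdots\geq_{h,l}s_n$. Admissible transformations: let $s$ be a vertex of $F$ which is the leftmost child of its parent $u$. (First kind) if $u$ is not a root, with parent $r$, detach the subtree rooted at $s$ and graft it as a child of $r$ placed immediately to the left of $u$; (second kind) if $u$ is a root, detach the subtree rooted at $s$ and insert it as a new tree of the forest immediately to the left of the tree of $u$. Everything else is unchanged. Such a transformation holds on $s$; it is a $j$-transformation if $s=s_j$. For $I$ a set of positive integers and forests $F,G$, $F\leq_I G$ iff there is a finite sequence $F=F_0,F_1,\dots,F_k=G$ ($k\geq0$) such that each $F_{i+1}$ is obtained from $F_i$ by a $j$-transformation for some $j\in I$. *)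

theory Defs
  imports Main
begin

text \<open>Planar rooted trees: a vertex with a (left-to-right ordered) list of children.
  A planar forest is a finite (possibly empty) list of planar rooted trees.\<close>
datatype ptree = Node "ptree list"

type_synonym pforest = "ptree list"

text \<open>Vertices of a forest are addressed by nonempty paths: the first entry is the
  index of the tree in the forest, each further entry is the index of a child.\<close>
fun is_vertex :: "pforest \<Rightarrow> nat list \<Rightarrow> bool" where
  "is_vertex ts [] = False"
| "is_vertex ts [i] = (i < length ts)"
| "is_vertex ts (i # j # p) = (i < length ts \<and> (case ts ! i of Node cs \<Rightarrow> is_vertex cs (j # p)))"

definition vertices :: "pforest \<Rightarrow> nat list set" where
  "vertices F = {s. is_vertex F s}"

definition weight :: "pforest \<Rightarrow> nat" where
  "weight F = card (vertices F)"

text \<open>s \<ge>_high s' iff s' = s or s' is an ancestor of s (i.e. the path of s' is a prefix of that of s).\<close>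
definition high_ge :: "nat list \<Rightarrow> nat list \<Rightarrow> bool" where
  "high_ge s s' = (\<exists>q. s = s' @ q)"

text \<open>s \<ge>_left s' (meaningful for \<ge>_high-incomparable vertices): s lies in an earlier tree,
  or both lie in the same tree and, recursively, s \<ge>_left s' in the forest obtained by
  deleting the root.\<close>
fun left_ge :: "nat list \<Rightarrow> nat list \<Rightarrow> bool" where
  "left_ge (i # p) (j # q) = (i < j \<or> (i = j \<and> left_ge p q))"
| "left_ge _ _ = False"

definition hl_ge :: "nat list \<Rightarrow> nat list \<Rightarrow> bool" where
  "hl_ge s s' = (high_ge s s' \<or> (\<not> high_ge s s' \<and> \<not> high_ge s' s \<and> left_ge s s'))"

text \<open>The j-th vertex s_j in the numbering s_1 \<ge>_{h,l} ... \<ge>_{h,l} s_n (1-indexed):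
  the vertex having exactly j-1 vertices strictly above it.\<close>
definition vertex_num :: "pforest \<Rightarrow> nat \<Rightarrow> nat list" where
  "vertex_num F j = (THE s. s \<in> vertices F \<and>
       card {s' \<in> vertices F. hl_ge s' s \<and> s' \<noteq> s} = j - 1)"

text \<open>Apply a function to the list of children of the vertex at path p
  (for p = [] to the list of trees of the forest itself).\<close>
fun modify_at :: "nat list \<Rightarrow> (pforest \<Rightarrow> pforest) \<Rightarrow> pforest \<Rightarrow> pforest" where
  "modify_at [] f ts = f ts"
| "modify_at (i # p) f ts = ts[i := (case ts ! i of Node cs \<Rightarrow> Node (modify_at p f cs))]"

text \<open>In a list of siblings cs, detach the leftmost child of cs!k (together with its subtree)
  and place it immediately to the left of cs!k.\<close>
definition promote :: "nat \<Rightarrow> pforest \<Rightarrow> pforest" where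
  "promote k cs = (case cs ! k of Node ds \<Rightarrow> take k cs @ [hd ds, Node (tl ds)] @ drop (Suc k) cs)"

text \<open>Admissible transformation holding on the vertex s: s is the leftmost child (index 0)
  of its parent u = r @ [k].  If r \<noteq> [] (u not a root, with parent r) this is the first
  kind; if r = [] (u is the root of the k-th tree) it is the second kind.\<close>
definition adm_trans :: "pforest \<Rightarrow> nat list \<Rightarrow> pforest \<Rightarrow> bool" where
  "adm_trans F s G = (s \<in> vertices F \<and>
     (\<exists>r k. s = r @ [k, 0] \<and> G = modify_at r (promote k) F))"

definition j_trans :: "nat \<Rightarrow> pforest \<Rightarrow> pforest \<Rightarrow> bool" where
  "j_trans j F G = (1 \<le> j \<and> j \<le> weight F \<and> adm_trans F (vertex_num F j) G)"

definition le_I :: "nat set \<Rightarrow> pforest \<Rightarrow> pforest \<Rightarrow> bool" where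
  "le_I I = (\<lambda>F G. \<exists>j\<in>I. j_trans j F G)\<^sup>*\<^sup>*"

end

theory Submission
  imports Defs
begin

fun sz :: "ptree \<Rightarrow> nat" where
  "sz (Node cs) = Suc (sum_list (map sz cs))"

fun dsum :: "ptree \<Rightarrow> nat" where
  "dsum (Node cs) = sum_list (map (\<lambda>c. dsum c + sz c) cs)"

definition SF :: "pforest \<Rightarrow> nat" where "SF ts = sum_list (map sz ts)"
definition MF :: "pforest \<Rightarrow> nat" where "MF ts = sum_list (map dsum ts)"

fun children :: "ptree \<Rightarrow> pforest" where "children (Node cs) = cs"

lemma sum_upd:
  assumes "i < length ts"
  shows "sum_list (map f (ts[i:=x])) + f (ts!i) = sum_list (map f ts) + (f x :: nat)"
  using assms
proof (induction ts arbitrary: i)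
  case Nil then show ?case by simp
next
  case (Cons a ts) then show ?case by (cases i) auto
qed

lemma promote_ok:
  assumes "k < length cs" "children (cs!k) \<noteq> []"
  shows "SF (promote k cs) = SF cs \<and> MF (promote k cs) < MF cs"
proof -
  obtain ds where d: "cs!k = Node ds" by (cases "cs!k") auto
  with assms have ne: "ds \<noteq> []" by simp
  then obtain h t where ht: "ds = h # t" by (cases ds) auto
  have e1: "cs = take k cs @ [cs!k] @ drop (Suc k) cs" using assms by (simp add: id_take_nth_drop)
  have p: "promote k cs = take k cs @ [h, Node t] @ drop (Suc k) cs"
    unfolding promote_def using d ht by simp
  have "SF cs = SF (take k cs) + sz (cs!k) + SF (drop (Suc k) cs)"
    unfolding SF_def by (subst e1) simp
  moreover have "MF cs = MF (take k cs) + dsum (cs!k) + MF (drop (Suc k) cs)"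
    unfolding MF_def by (subst e1) simp
  moreover have "SF (promote k cs) = SF (take k cs) + sz h + sz (Node t) + SF (drop (Suc k) cs)"
    unfolding SF_def p by simp
  moreover have "MF (promote k cs) = MF (take k cs) + dsum h + dsum (Node t) + MF (drop (Suc k) cs)"
    unfolding MF_def p by simp
  moreover have "sz h > 0" by (cases h) auto
  ultimately show ?thesis using d ht by simp
qed

lemma is_vertex_cons:
  "q \<noteq> [] \<Longrightarrow> is_vertex ts (i # q) = (i < length ts \<and> is_vertex (children (ts!i)) q)"
  by (cases q; cases "ts!i") auto

lemma dsum_node: "dsum (Node cs) = MF cs + SF cs"
  unfolding MF_def SF_def by (induct cs) auto

lemma modify_ok:
  "is_vertex F (r @ [k, 0]) \<Longrightarrow>
   SF (modify_at r (promote k) F) = SF F \<and> MF (modify_at r (promote k) F) < MF F"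
proof (induction r arbitrary: F)
  case Nil
  then have "k < length F" "children (F!k) \<noteq> []"
    by (auto simp: is_vertex_cons split: ptree.splits)
  then show ?case by (simp add: promote_ok)
next
  case (Cons i p)
  obtain cs where c: "F!i = Node cs" by (cases "F!i") auto
  from Cons.prems have i: "i < length F" and v: "is_vertex cs (p @ [k,0])"
    using is_vertex_cons[of "p @ [k,0]" F i] c by auto
  from Cons.IH[OF v] have ih: "SF (modify_at p (promote k) cs) = SF cs"
    "MF (modify_at p (promote k) cs) < MF cs" by auto
  let ?x = "Node (modify_at p (promote k) cs)"
  have m: "modify_at (i # p) (promote k) F = F[i := ?x]" using c by simp
  have a1: "SF (F[i:=?x]) + sz (F!i) = SF F + sz ?x" unfolding SF_def by (rule sum_upd[OF i])
  have a2: "MF (F[i:=?x]) + dsum (F!i) = MF F + dsum ?x" unfolding MF_def by (rule sum_upd[OF i])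
  have "sz ?x = sz (F!i)" using c ih by (simp add: SF_def)
  moreover have "dsum ?x < dsum (F!i)" using c ih by (simp only: dsum_node)
  ultimately show ?case using a1 a2 m by simp
qed

lemma step_dec: "j_trans j F G \<Longrightarrow> MF G < MF F"
  unfolding j_trans_def adm_trans_def vertices_def using modify_ok by auto

lemma rt_dec:
  assumes "le_I I F G" shows "F = G \<or> MF G < MF F"
  using assms unfolding le_I_def
proof (induction rule: rtranclp_induct)
  case base then show ?case by simp
next
  case (step y z)
  then obtain j where "j_trans j y z" by auto
  then have "MF z < MF y" by (rule step_dec)
  with step.IH show ?case by auto
qed

theorem proposition27:
  fixes I :: "nat set"
  assumes "0 \<notin> I"
  shows "partial_order_on UNIV {(F, G). le_I I F G}"
  unfolding partial_order_on_def preorder_on_def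
proof (intro conjI)
  show "refl_on UNIV {(F, G). le_I I F G}"
    unfolding refl_on_def le_I_def by auto
  show "trans {(F, G). le_I I F G}"
    unfolding trans_def le_I_def by auto
  show "antisym {(F, G). le_I I F G}"
  proof (rule antisymI)
    fix x y assume "(x, y) \<in> {(F, G). le_I I F G}" "(y, x) \<in> {(F, G). le_I I F G}"
    then have "x = y \<or> MF y < MF x" "y = x \<or> MF x < MF y" using rt_dec by auto
    then show "x = y" by auto
  qed
qed auto

end
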